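(* Let $s\geq2$ and $\phi\in\mathrm{Aut}_{s-1}(H)$. Then there exists a unique $\beta=(\beta_n)_{n\in\mathbb{Z}}\in k^{\mathbb{Z}}$ such that $\phi(x^ny^s)=x^ny^s+\beta_n(x^{n+s}-x^n)$ for all $n\in\mathbb{Z}$.
   Context: Let $k$ be a field and $0\neq q\in k$ not a root of unity. $H=k_q[x,x^{-1},y]$ is the $k$-algebra generated by $x,x^{-1},y$ with $xx^{-1}=x^{-1}x=1$, $yx=qxy$, a Hopf algebra with $\Delta(x)=x\otimes x$, $\Delta(x^{-1})=x^{-1}\otimes x^{-1}$, $\Delta(y)=y\otimes x+1\otimes y$, $\varepsilon(x)=1$, $\varepsilon(y)=0$; $\{x^ny^m:n\in\mathbb{Z},m\in\mathbb{N}\}$ is a $k$-basis. $H_0=\mathrm{span}\{x^n\}$, $H(m)=H_0y^m$. $\mathrm{Aut}_c(H)$ is the group of coalgebra automorphisms of $H$, and for $m\geq1$, $\mathrm{Aut}_m(H)=\{\phi\in\mathrm{Aut}_c(H):\phi(h)=h\text{ for all }h\in\sum_{i=0}^mH(i)\}$. *)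

theory Defs
  imports Main
begin

text \<open>Elements of H = k_q[x,x^-1,y] are represented by their coordinate functions
  w.r.t. the basis x^n y^m, indexed by (n,m) :: int \<times> nat; elements of H \<otimes> H by
  coordinate functions w.r.t. the basis (x^a y^b) \<otimes> (x^c y^d).\<close>

definition csupp :: "('a \<Rightarrow> 'k::zero) \<Rightarrow> 'a set" where
  "csupp f = {a. f a \<noteq> 0}"

definition Hsp :: "(int \<times> nat \<Rightarrow> 'k::zero) set" where
  "Hsp = {f. finite (csupp f)}"

definition bas :: "'a \<Rightarrow> 'a \<Rightarrow> 'k::{zero,one}" where
  "bas a = (\<lambda>b. if b = a then 1 else 0)"

definition lin :: "('a \<Rightarrow> 'b \<Rightarrow> 'k::comm_semiring_1) \<Rightarrow> ('a \<Rightarrow> 'k) \<Rightarrow> 'b \<Rightarrow> 'k" where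
  "lin T f = (\<lambda>c. \<Sum>a\<in>csupp f. f a * T a c)"

text \<open>Bilinear extension of a twisted monomial multiplication
  (basis a times basis b = tw a b * basis (comb a b)).\<close>
definition twmul :: "('a \<Rightarrow> 'a \<Rightarrow> 'a) \<Rightarrow> ('a \<Rightarrow> 'a \<Rightarrow> 'k::comm_semiring_1)
     \<Rightarrow> ('a \<Rightarrow> 'k) \<Rightarrow> ('a \<Rightarrow> 'k) \<Rightarrow> 'a \<Rightarrow> 'k" where
  "twmul comb tw f g = (\<lambda>c. \<Sum>p\<in>{(a,b). a \<in> csupp f \<and> b \<in> csupp g \<and> comb a b = c}.
      f (fst p) * g (snd p) * tw (fst p) (snd p))"

text \<open>Multiplication in H: (x^a y^b)(x^c y^d) = q^(b c) x^(a+c) y^(b+d), since y x = q x y.\<close>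
definition hcomb :: "int \<times> nat \<Rightarrow> int \<times> nat \<Rightarrow> int \<times> nat" where
  "hcomb u v = (fst u + fst v, snd u + snd v)"

definition htw :: "'k::field \<Rightarrow> int \<times> nat \<Rightarrow> int \<times> nat \<Rightarrow> 'k" where
  "htw q u v = q powi (int (snd u) * fst v)"

definition hmul :: "'k::field \<Rightarrow> (int \<times> nat \<Rightarrow> 'k) \<Rightarrow> (int \<times> nat \<Rightarrow> 'k) \<Rightarrow> int \<times> nat \<Rightarrow> 'k" where
  "hmul q = twmul hcomb (htw q)"

definition tcomb :: "(int \<times> nat) \<times> (int \<times> nat) \<Rightarrow> (int \<times> nat) \<times> (int \<times> nat) \<Rightarrow> (int \<times> nat) \<times> (int \<times> nat)" where
  "tcomb u v = (hcomb (fst u) (fst v), hcomb (snd u) (snd v))"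

definition ttw :: "'k::field \<Rightarrow> (int \<times> nat) \<times> (int \<times> nat) \<Rightarrow> (int \<times> nat) \<times> (int \<times> nat) \<Rightarrow> 'k" where
  "ttw q u v = htw q (fst u) (fst v) * htw q (snd u) (snd v)"

definition tmul :: "'k::field \<Rightarrow> ((int \<times> nat) \<times> (int \<times> nat) \<Rightarrow> 'k)
    \<Rightarrow> ((int \<times> nat) \<times> (int \<times> nat) \<Rightarrow> 'k) \<Rightarrow> (int \<times> nat) \<times> (int \<times> nat) \<Rightarrow> 'k" where
  "tmul q = twmul tcomb (ttw q)"

text \<open>\<Delta>(y) = y \<otimes> x + 1 \<otimes> y, \<Delta>(x^n) = x^n \<otimes> x^n.\<close>
definition Delta_y :: "(int \<times> nat) \<times> (int \<times> nat) \<Rightarrow> 'k::field" where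
  "Delta_y = (\<lambda>c. bas ((0,1),(1,0)) c + bas ((0,0),(0,1)) c)"

text \<open>\<Delta>(x^n y^m) = \<Delta>(x)^n \<Delta>(y)^m (\<Delta> is an algebra map).\<close>
definition Dbasis :: "'k::field \<Rightarrow> int \<times> nat \<Rightarrow> (int \<times> nat) \<times> (int \<times> nat) \<Rightarrow> 'k" where
  "Dbasis q a = tmul q (bas ((fst a, 0), (fst a, 0)))
       ((tmul q Delta_y ^^ snd a) (bas ((0,0),(0,0))))"

definition comult :: "'k::field \<Rightarrow> (int \<times> nat \<Rightarrow> 'k) \<Rightarrow> (int \<times> nat) \<times> (int \<times> nat) \<Rightarrow> 'k" where
  "comult q f = lin (Dbasis q) f"

definition counit :: "(int \<times> nat \<Rightarrow> 'k::field) \<Rightarrow> 'k" where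
  "counit f = (\<Sum>a\<in>csupp f. f a * (if snd a = 0 then 1 else 0))"

definition tmap :: "((int \<times> nat \<Rightarrow> 'k::field) \<Rightarrow> (int \<times> nat \<Rightarrow> 'k)) \<Rightarrow> ((int \<times> nat \<Rightarrow> 'k) \<Rightarrow> (int \<times> nat \<Rightarrow> 'k))
    \<Rightarrow> ((int \<times> nat) \<times> (int \<times> nat) \<Rightarrow> 'k) \<Rightarrow> (int \<times> nat) \<times> (int \<times> nat) \<Rightarrow> 'k" where
  "tmap \<phi> \<psi> g = lin (\<lambda>p. \<lambda>c. \<phi> (bas (fst p)) (fst c) * \<psi> (bas (snd p)) (snd c)) g"

definition linear_on_H :: "((int \<times> nat \<Rightarrow> 'k::field) \<Rightarrow> (int \<times> nat \<Rightarrow> 'k)) \<Rightarrow> bool" where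
  "linear_on_H \<phi> \<longleftrightarrow>
     (\<forall>f\<in>Hsp. \<forall>g\<in>Hsp. \<phi> (\<lambda>a. f a + g a) = (\<lambda>a. \<phi> f a + \<phi> g a)) \<and>
     (\<forall>f\<in>Hsp. \<forall>c. \<phi> (\<lambda>a. c * f a) = (\<lambda>a. c * \<phi> f a))"

text \<open>Coalgebra automorphisms of H (the map is considered on Hsp only).\<close>
definition Aut_c :: "'k::field \<Rightarrow> ((int \<times> nat \<Rightarrow> 'k) \<Rightarrow> (int \<times> nat \<Rightarrow> 'k)) set" where
  "Aut_c q = {\<phi>. linear_on_H \<phi> \<and> bij_betw \<phi> Hsp Hsp \<and>
      (\<forall>f\<in>Hsp. comult q (\<phi> f) = tmap \<phi> \<phi> (comult q f) \<and> counit (\<phi> f) = counit f)}"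

text \<open>Aut_m(H): coalgebra automorphisms fixing H(0) + ... + H(m) pointwise.\<close>
definition Aut_m :: "'k::field \<Rightarrow> nat \<Rightarrow> ((int \<times> nat \<Rightarrow> 'k) \<Rightarrow> (int \<times> nat \<Rightarrow> 'k)) set" where
  "Aut_m q m = {\<phi>. \<phi> \<in> Aut_c q \<and>
      (\<forall>h\<in>Hsp. (\<forall>a\<in>csupp h. snd a \<le> m) \<longrightarrow> \<phi> h = h)}"

end

theory Submission
  imports Defs
begin

lemma L1:
  assumes "finite S" "csupp f \<subseteq> S" "finite T" "csupp g \<subseteq> T"
  shows "twmul comb tw f g c = (\<Sum>a\<in>S. \<Sum>b\<in>T. if comb a b = c then f a * g b * tw a b else 0)"
proof -
  have fS: "finite (csupp f)" using assms finite_subset by blast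
  have fT: "finite (csupp g)" using assms finite_subset by blast
  have "(\<Sum>a\<in>S. \<Sum>b\<in>T. if comb a b = c then f a * g b * tw a b else 0)
      = (\<Sum>a\<in>csupp f. \<Sum>b\<in>T. if comb a b = c then f a * g b * tw a b else 0)"
    by (rule sum.mono_neutral_right[OF assms(1,2)]) (auto simp: csupp_def intro!: sum.neutral split: if_splits)
  also have "\<dots> = (\<Sum>a\<in>csupp f. \<Sum>b\<in>csupp g. if comb a b = c then f a * g b * tw a b else 0)"
    by (rule sum.cong[OF refl], rule sum.mono_neutral_right[OF assms(3,4)]) (auto simp: csupp_def)
  also have "\<dots> = (\<Sum>p\<in>csupp f \<times> csupp g. if comb (fst p) (snd p) = c then f (fst p) * g (snd p) * tw (fst p) (snd p) else 0)"
    by (simp add: sum.cartesian_product case_prod_beta)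
  also have "\<dots> = (\<Sum>p\<in>{p\<in>csupp f \<times> csupp g. comb (fst p) (snd p) = c}. f (fst p) * g (snd p) * tw (fst p) (snd p))"
    by (rule sum.inter_filter[symmetric]) (use fS fT in simp)
  also have "{p\<in>csupp f \<times> csupp g. comb (fst p) (snd p) = c} = {(a,b). a \<in> csupp f \<and> b \<in> csupp g \<and> comb a b = c}"
    by auto
  finally show ?thesis by (simp add: twmul_def)
qed

lemma L2:
  assumes "\<And>b. P b \<longleftrightarrow> (Q \<and> b = bz)" "finite T" "bz \<notin> T \<Longrightarrow> F bz = 0"
  shows "(\<Sum>b\<in>T. if P b then F b else (0::'k::comm_monoid_add)) = (if Q then F bz else 0)"
proof (cases Q)
  case True
  then have "(\<Sum>b\<in>T. if P b then F b else 0) = (\<Sum>b\<in>T. if b = bz then F b else 0)"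
    using assms(1) by (intro sum.cong) auto
  also have "\<dots> = (if bz \<in> T then F bz else 0)" using assms(2) by (simp add: sum.delta')
  finally show ?thesis using True assms(3) by auto
next
  case False then show ?thesis using assms(1) by simp
qed


fun qb :: "'k::field \<Rightarrow> nat \<Rightarrow> nat \<Rightarrow> 'k" where
  "qb q 0 i = (if i = 0 then 1 else 0)"
| "qb q (Suc m) i = (if i = 0 then 0 else qb q m (i - 1)) + q ^ i * qb q m i"

lemma qb_gt: "m < i \<Longrightarrow> qb q m i = 0"
  by (induction m arbitrary: i) auto

lemma qb_1: "(1 - q) * qb q m 1 = 1 - q ^ m"
proof (induction m)
  case (Suc m)
  have "qb q m 0 = 1" by (induction m) auto
  have "q * ((1 - q) * qb q m 1) = q * (1 - q ^ m)" using Suc by simp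
  then show ?case using \<open>qb q m 0 = 1\<close> by (simp add: algebra_simps)
qed simp

lemma qb_1_nz: assumes "\<forall>n::nat. n > 0 \<longrightarrow> q ^ n \<noteq> 1" "m > 0" shows "qb q m 1 \<noteq> 0"
  using qb_1[of q m] assms by force

definition E :: "'k::field \<Rightarrow> nat \<Rightarrow> (int \<times> nat) \<times> (int \<times> nat) \<Rightarrow> 'k" where
  "E q m c = (if fst (fst c) = 0 \<and> fst (snd c) = int (snd (fst c)) \<and> snd (fst c) + snd (snd c) = m
     then qb q m (snd (fst c)) else 0)"

lemma E_supp: "csupp (E q m) \<subseteq> (\<lambda>i. ((0,i),(int i, m - i))) ` {..m}"
  by (auto simp: csupp_def E_def split: if_splits intro!: image_eqI)

lemma E_fin: "finite (csupp (E q m))"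
  using E_supp finite_subset by blast

lemma bas_supp: "csupp (bas a :: _ \<Rightarrow> 'k::{zero_neq_one}) = {a}"
  by (auto simp: csupp_def bas_def)

lemma E0: "E q 0 = bas ((0,0),(0,0))"
  by (auto simp: E_def bas_def fun_eq_iff)

lemma E_step: "tmul q Delta_y (E q m) = E q (Suc m)"
proof
  fix c :: "(int \<times> nat) \<times> (int \<times> nat)"
  obtain a i cc d where c: "c = ((a,i),(cc,d))" by (metis prod.exhaust)
  define u1 :: "(int \<times> nat) \<times> (int \<times> nat)" where "u1 = ((0,1),(1,0))"
  define u2 :: "(int \<times> nat) \<times> (int \<times> nat)" where "u2 = ((0,0),(0,1))"
  have sD: "csupp (Delta_y :: _ \<Rightarrow> 'a) \<subseteq> {u1,u2}"
    by (auto simp: csupp_def Delta_y_def bas_def u1_def u2_def split: if_splits)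
  have ne: "u1 \<noteq> u2" by (simp add: u1_def u2_def)
  have "tmul q Delta_y (E q m) c = (\<Sum>a\<in>{u1,u2}. \<Sum>b\<in>csupp (E q m). if tcomb a b = c then Delta_y a * E q m b * ttw q a b else 0)"
    unfolding tmul_def by (rule L1[OF _ sD _ order_refl]) (auto simp: E_fin)
  also have "\<dots> = (\<Sum>b\<in>csupp (E q m). if tcomb u1 b = c then Delta_y u1 * E q m b * ttw q u1 b else 0)
     + (\<Sum>b\<in>csupp (E q m). if tcomb u2 b = c then Delta_y u2 * E q m b * ttw q u2 b else 0)"
    using ne by simp
  also have "(\<Sum>b\<in>csupp (E q m). if tcomb u1 b = c then Delta_y u1 * E q m b * ttw q u1 b else 0)
     = (if i \<ge> 1 then Delta_y u1 * E q m ((a, i-1),(cc-1,d)) * ttw q u1 ((a, i-1),(cc-1,d)) else 0)"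
    apply (rule L2)
    apply (auto simp: c u1_def tcomb_def hcomb_def)[1]
    apply (rule E_fin)
    apply (auto simp: csupp_def)
    done
  also have "(\<Sum>b\<in>csupp (E q m). if tcomb u2 b = c then Delta_y u2 * E q m b * ttw q u2 b else 0)
     = (if d \<ge> 1 then Delta_y u2 * E q m ((a, i),(cc,d-1)) * ttw q u2 ((a, i),(cc,d-1)) else 0)"
    apply (rule L2)
    apply (auto simp: c u2_def tcomb_def hcomb_def)[1]
    apply (rule E_fin)
    apply (auto simp: csupp_def)
    done
  finally have eq: "tmul q Delta_y (E q m) c = (if i \<ge> 1 then Delta_y u1 * E q m ((a, i-1),(cc-1,d)) * ttw q u1 ((a, i-1),(cc-1,d)) else 0)
      + (if d \<ge> 1 then Delta_y u2 * E q m ((a, i),(cc,d-1)) * ttw q u2 ((a, i),(cc,d-1)) else 0)" .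
  show "tmul q Delta_y (E q m) c = E q (Suc m) c"
    unfolding eq by (auto simp: c u1_def u2_def Delta_y_def bas_def E_def ttw_def htw_def qb_gt)
qed


lemma pow_E: "(tmul q Delta_y ^^ m) (bas ((0,0),(0,0))) = E q m"
  by (induction m) (simp_all add: E0 E_step)

lemma Dbasis_eq: "Dbasis q (n,m) ((a,i),(cc,d)) =
   (if a = n \<and> cc = n + int i \<and> i + d = m then qb q m i else 0)"
proof -
  define w :: "(int \<times> nat) \<times> (int \<times> nat)" where "w = ((n,0),(n,0))"
  have "Dbasis q (n,m) ((a,i),(cc,d)) = tmul q (bas w) (E q m) ((a,i),(cc,d))"
    by (simp add: Dbasis_def pow_E w_def)
  also have "\<dots> = (\<Sum>u\<in>{w}. \<Sum>b\<in>csupp (E q m). if tcomb u b = ((a,i),(cc,d)) then bas w u * E q m b * ttw q u b else 0)"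
    unfolding tmul_def by (rule L1) (auto simp: E_fin bas_supp)
  also have "\<dots> = (\<Sum>b\<in>csupp (E q m). if tcomb w b = ((a,i),(cc,d)) then bas w w * E q m b * ttw q w b else 0)"
    by simp
  also have "\<dots> = (if True then bas w w * E q m ((a - n,i),(cc - n,d)) * ttw q w ((a - n,i),(cc - n,d)) else 0)"
    apply (rule L2)
    apply (auto simp: w_def tcomb_def hcomb_def)[1]
    apply (rule E_fin)
    apply (auto simp: csupp_def)
    done
  finally show ?thesis
    by (auto simp: w_def bas_def E_def ttw_def htw_def)
qed

lemma comult_eq:
  assumes "finite (csupp g)"
  shows "comult q g ((a,i),(cc,d)) = (if cc = a + int i then g (a, i+d) * qb q (i+d) i else 0)"
proof -
  have "comult q g ((a,i),(cc,d)) = (\<Sum>u\<in>csupp g. g u * Dbasis q u ((a,i),(cc,d)))"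
    by (simp add: comult_def lin_def)
  also have "\<dots> = (\<Sum>u\<in>csupp g. if fst u = a \<and> cc = a + int i \<and> i + d = snd u then g u * qb q (snd u) i else 0)"
    by (rule sum.cong) (auto simp: Dbasis_eq split: if_splits)
  also have "\<dots> = (if cc = a + int i then g (a, i+d) * qb q (i+d) i else 0)"
    by (rule trans, rule L2[where F="\<lambda>u. g u * qb q (snd u) i" and bz="(a,i+d)" and Q="cc = a + int i"
          and P="\<lambda>u. fst u = a \<and> cc = a + int i \<and> i + d = snd u"]) (use assms in \<open>auto simp: csupp_def\<close>)
  finally show ?thesis .
qed


lemma g_shape:
  fixes g :: "int \<times> nat \<Rightarrow> 'k::field"
  assumes q: "\<forall>n::nat. n > 0 \<longrightarrow> q ^ n \<noteq> 1" and s: "s \<ge> 2"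
    and K: "\<And>a i cc d. (if cc = a + int i then g (a, i+d) * qb q (i+d) i else 0)
        = bas (n,0) (a,i) * g (cc,d) + g (a,i) * bas (n + int s,0) (cc,d)
          + (if a = n \<and> 1 \<le> i \<and> i < s then qb q s i * bas (n + int i, s - i) (cc,d) else 0)"
  shows "g = (\<lambda>c. bas (n, s) c + g (n + int s, 0) * (bas (n + int s, 0) c - bas (n, 0) c))"
proof
  fix c :: "int \<times> nat"
  obtain a b where c: "c = (a,b)" by (metis prod.exhaust)
  have A: "g (a,b) = (if a = n \<and> b = s then 1 else 0)" if "b \<ge> 2" for a b
  proof -
    have "g (a,b) * qb q b 1 = (if a = n \<and> b = s then qb q s 1 else 0)"
      using K[of "a + 1" a 1 "b - 1"] that s by (auto simp: bas_def)
    moreover have "qb q b 1 \<noteq> 0" using qb_1_nz[OF q] that by simp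
    ultimately show ?thesis by (auto split: if_splits)
  qed
  have qb10: "qb q 1 1 = 1" "qb q 1 0 = 1" "qb q 0 0 = 1" by simp_all
  have B: "g (a,1) = 0" for a
  proof -
    have "g (a,1) = g (a,1) * (if a + 1 = n + int s then 1 else 0)"
      using K[of "a + 1" a 1 0] s by (auto simp: bas_def)
    moreover have "g (a,1) = (if a = n then g (a,1) else 0)"
      using K[of a a 0 1] s by (auto simp: bas_def)
    ultimately show ?thesis using s by (auto split: if_splits)
  qed
  have C: "g (a,0) = 0" if "a \<noteq> n" "a \<noteq> n + int s" for a
    using K[of a a 0 0] s that by (auto simp: bas_def)
  have D: "g (n,0) = - g (n + int s, 0)"
    using K[of "n + int s" n 0 0] s by (auto simp: bas_def add_eq_0_iff)
  show "g c = bas (n, s) c + g (n + int s, 0) * (bas (n + int s, 0) c - bas (n, 0) c)"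
  proof (cases "b \<ge> 2")
    case True then show ?thesis using A[OF True] s by (auto simp: c bas_def)
  next
    case False
    then consider "b = 0" | "b = 1" by linarith
    then show ?thesis
    proof cases
      case 1 then show ?thesis using C D s by (auto simp: c bas_def)
    next
      case 2 then show ?thesis using B s by (auto simp: c bas_def)
    qed
  qed
qed


lemma qb_0: "qb q m 0 = 1" by (induction m) auto
lemma qb_m: "qb q m m = 1" by (induction m) (auto simp: qb_gt)

lemma comult_bas: "comult q (bas a) = Dbasis q a"
  by (simp add: comult_def lin_def bas_supp) (simp add: bas_def)

lemma tmap_eq:
  assumes s: "s \<ge> 2" and fx: "\<And>m j. j < s \<Longrightarrow> \<phi> (bas (m,j)) = bas (m,j)"
  shows "tmap \<phi> \<phi> (comult q (bas (n,s))) ((a,i),(cc,d))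
     = bas (n,0) (a,i) * \<phi> (bas (n,s)) (cc,d) + \<phi> (bas (n,s)) (a,i) * bas (n + int s,0) (cc,d)
          + (if a = n \<and> 1 \<le> i \<and> i < s then qb q s i * bas (n + int i, s - i) (cc,d) else 0)"
proof -
  define P where "P = Dbasis q (n,s)"
  define T where "T = (\<lambda>p c. \<phi> (bas (fst p)) (fst c) * \<phi> (bas (snd p)) (snd c))"
  define S where "S = (\<lambda>j. ((n,j),(n + int j, s - j))) ` {..s}"
  have sub: "csupp P \<subseteq> S"
  proof
    fix p assume "p \<in> csupp P"
    moreover obtain a1 i1 c1 d1 where p: "p = ((a1,i1),(c1,d1))" by (metis prod.exhaust)
    ultimately have "a1 = n \<and> c1 = n + int i1 \<and> i1 + d1 = s"
      by (auto simp: P_def csupp_def Dbasis_eq split: if_splits)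
    then show "p \<in> S" unfolding S_def p by (intro image_eqI[where x=i1]) auto
  qed
  have "tmap \<phi> \<phi> (comult q (bas (n,s))) ((a,i),(cc,d)) = (\<Sum>p\<in>csupp P. P p * T p ((a,i),(cc,d)))"
    by (simp add: tmap_def lin_def comult_bas P_def T_def)
  also have "\<dots> = (\<Sum>p\<in>S. P p * T p ((a,i),(cc,d)))"
    by (rule sum.mono_neutral_left[OF _ sub]) (auto simp: S_def csupp_def)
  also have "\<dots> = (\<Sum>j\<in>{..s}. P ((n,j),(n + int j, s - j)) * T ((n,j),(n + int j, s - j)) ((a,i),(cc,d)))"
    unfolding S_def by (rule sum.reindex_cong[where l="\<lambda>j. ((n,j),(n + int j, s - j))"]) (auto simp: inj_on_def)
  also have "\<dots> = (\<Sum>j\<in>{..s}. qb q s j * (\<phi> (bas (n,j)) (a,i) * \<phi> (bas (n + int j, s - j)) (cc,d)))"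
    by (rule sum.cong) (auto simp: P_def T_def Dbasis_eq)
  also have "{..s} = insert 0 (insert s {1..<s})" using s by auto
  also have "(\<Sum>j\<in>insert 0 (insert s {1..<s}). qb q s j * (\<phi> (bas (n,j)) (a,i) * \<phi> (bas (n + int j, s - j)) (cc,d)))
      = qb q s 0 * (\<phi> (bas (n,0)) (a,i) * \<phi> (bas (n + int 0, s - 0)) (cc,d))
        + (qb q s s * (\<phi> (bas (n,s)) (a,i) * \<phi> (bas (n + int s, s - s)) (cc,d))
        + (\<Sum>j\<in>{1..<s}. qb q s j * (\<phi> (bas (n,j)) (a,i) * \<phi> (bas (n + int j, s - j)) (cc,d))))"
    using s by (simp add: sum.insert)
  also have "(\<Sum>j\<in>{1..<s}. qb q s j * (\<phi> (bas (n,j)) (a,i) * \<phi> (bas (n + int j, s - j)) (cc,d)))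
      = (\<Sum>j\<in>{1..<s}. if j = i then (if a = n then qb q s j * bas (n + int j, s - j) (cc,d) else 0) else 0)"
    apply (rule sum.cong, simp)
    apply (subst fx, simp, subst fx, simp)
    apply (auto simp: bas_def)
    done
  also have "\<dots> = (if a = n \<and> 1 \<le> i \<and> i < s then qb q s i * bas (n + int i, s - i) (cc,d) else 0)"
    by (simp add: sum.delta')
  finally show ?thesis using s by (simp add: qb_0 qb_m fx)
qed


theorem lemma3p5:
  fixes q :: "'k::field" and s :: nat and \<phi> :: "(int \<times> nat \<Rightarrow> 'k) \<Rightarrow> (int \<times> nat \<Rightarrow> 'k)"
  assumes "q \<noteq> 0" and "\<forall>n::nat. n > 0 \<longrightarrow> q ^ n \<noteq> 1"
    and "s \<ge> 2" and "\<phi> \<in> Aut_m q (s - 1)"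
  shows "\<exists>!\<beta> :: int \<Rightarrow> 'k. \<forall>n::int.
           \<phi> (bas (n, s)) = (\<lambda>c. bas (n, s) c + \<beta> n * (bas (n + int s, 0) c - bas (n, 0) c))"
proof -
  have s: "s \<ge> 2" by fact
  have bij: "bij_betw \<phi> Hsp Hsp"
    and cm: "\<And>f. f \<in> Hsp \<Longrightarrow> comult q (\<phi> f) = tmap \<phi> \<phi> (comult q f)"
    and fixh: "\<And>h. h \<in> Hsp \<Longrightarrow> (\<forall>a\<in>csupp h. snd a \<le> s - 1) \<Longrightarrow> \<phi> h = h"
    using assms(4) unfolding Aut_m_def Aut_c_def by blast+
  have basH: "(bas a :: _ \<Rightarrow> 'k) \<in> Hsp" for a :: "int \<times> nat"
    by (simp add: Hsp_def bas_supp)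
  have fx: "\<phi> (bas (m,j)) = bas (m,j)" if "j < s" for m j
  proof -
    have "\<forall>a\<in>csupp (bas (m,j) :: _ \<Rightarrow> 'k). snd a \<le> s - 1" using that by (simp add: bas_supp)
    then show ?thesis using fixh[OF basH] by blast
  qed
  have shape: "\<phi> (bas (n,s)) = (\<lambda>c. bas (n, s) c + \<phi> (bas (n,s)) (n + int s, 0) * (bas (n + int s, 0) c - bas (n, 0) c))"
    for n
  proof (rule g_shape[OF assms(2) s])
    fix a i cc d
    have gH: "\<phi> (bas (n,s)) \<in> Hsp" by (rule bij_betw_apply[OF bij basH])
    then have fin: "finite (csupp (\<phi> (bas (n,s))))" by (simp add: Hsp_def)
    have "comult q (\<phi> (bas (n,s))) ((a,i),(cc,d)) = tmap \<phi> \<phi> (comult q (bas (n,s))) ((a,i),(cc,d))"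
      by (simp only: cm[OF basH])
    then show "(if cc = a + int i then \<phi> (bas (n,s)) (a, i+d) * qb q (i+d) i else 0)
        = bas (n,0) (a,i) * \<phi> (bas (n,s)) (cc,d) + \<phi> (bas (n,s)) (a,i) * bas (n + int s,0) (cc,d)
          + (if a = n \<and> 1 \<le> i \<and> i < s then qb q s i * bas (n + int i, s - i) (cc,d) else 0)"
      using tmap_eq[OF s fx, of q n a i cc d] comult_eq[OF fin, of q a i cc d] by simp
  qed
  show ?thesis
  proof (rule ex1I[where a="\<lambda>n. \<phi> (bas (n,s)) (n + int s, 0)"])
    show "\<forall>n. \<phi> (bas (n, s)) = (\<lambda>c. bas (n, s) c + \<phi> (bas (n,s)) (n + int s, 0) * (bas (n + int s, 0) c - bas (n, 0) c))"
      using shape by blast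
  next
    fix \<beta> assume h: "\<forall>n::int. \<phi> (bas (n, s)) = (\<lambda>c. bas (n, s) c + \<beta> n * (bas (n + int s, 0) c - bas (n, 0) c))"
    show "\<beta> = (\<lambda>n. \<phi> (bas (n,s)) (n + int s, 0))"
    proof
      fix n
      show "\<beta> n = \<phi> (bas (n,s)) (n + int s, 0)"
        using fun_cong[OF spec[OF h, of n], of "(n + int s, 0)"] s by (simp add: bas_def)
    qed
  qed
qed

end
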